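(* For all positive integers $n\geq 2$ and $t$, $|D_{n,t}|=\left\lceil\frac{n^t}{n+1}\right\rceil$.
   Context: For a positive integer $n$ let $[n]=\{1,\dots,n\}$; vertices of the Sierpiński graph $S(K_n,t)$ are words in $[n]^t$. Write $a^k$ for the word consisting of $k$ copies of the letter $a$. The sets $D_{n,t}\subseteq[n]^t$ are defined recursively: $D_{n,1}=\{1\}$, $D_{n,2}=\{11,21,\dots,n1\}$. For $t\geq 3$ and $\mathbf v=v_1\cdots v_{t-2}\in D_{n,t-2}$ put $E_1(\mathbf v)=\{v_1\cdots v_{t-2}\alpha\alpha:\alpha\in[n]\}$, $E_2(\mathbf v)=\{v_1\cdots v_{t-3}\alpha\beta v_{t-2}:\alpha,\beta\in[n]\setminus\{v_{t-2}\}\}$, and, if $\mathbf v$ is not a constant word, let $\ell$ be the largest index in $[t-3]$ with $v_\ell\neq v_{\ell+1}$ and put $E_3(\mathbf v)=\{v_1\cdots v_{\ell-1}v_{\ell+1}v_\ell^{\,t-\ell-2}\alpha v_\ell:\alpha\in[n]\setminus\{v_\ell\}\}$. If $t\geq 3$ is odd, $D_{n,t}=E_1(1^{t-2})\cup E_2(1^{t-2})\cup\bigcup_{\mathbf v\in D_{n,t-2}\setminus\{1^{t-2}\}}\big(E_1(\mathbf v)\cup E_2(\mathbf v)\cup E_3(\mathbf v)\big)$. If $t\geq 4$ is even, $D_{n,t}=\{1^{t-2}\alpha1:\alpha\in[n]\}\cup\bigcup_{\mathbf v\in D_{n,t-2}\setminus\{1^{t-2}\}}\big(E_1(\mathbf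 v)\cup E_2(\mathbf v)\cup E_3(\mathbf v)\big)$. (In this recursion $1^{t-2}\in D_{n,t-2}$ is the only constant word in $D_{n,t-2}$, so $E_3$ is applied only to non-constant words.) *)

theory Defs
  imports Complex_Main
begin

text \<open>Words in [n]^t are lists of naturals with letters in {1..n}; list position i (0-based)
  holds the letter v_(i+1) of the paper.\<close>

definition E1 :: "nat \<Rightarrow> nat list \<Rightarrow> nat list set" where
  "E1 n v = {v @ [a, a] | a. a \<in> {1..n}}"

definition E2 :: "nat \<Rightarrow> nat list \<Rightarrow> nat list set" where
  "E2 n v = {butlast v @ [a, b, last v] | a b. a \<in> {1..n} - {last v} \<and> b \<in> {1..n} - {last v}}"

definition ell :: "nat list \<Rightarrow> nat" where
  "ell v = Max {l \<in> {1..length v - 1}. v ! (l - 1) \<noteq> v ! l}"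

definition E3 :: "nat \<Rightarrow> nat list \<Rightarrow> nat list set" where
  "E3 n v = (let l = ell v in
     {take (l - 1) v @ [v ! l] @ replicate (length v - l) (v ! (l - 1)) @ [a, v ! (l - 1)]
       | a. a \<in> {1..n} - {v ! (l - 1)}})"

fun D :: "nat \<Rightarrow> nat \<Rightarrow> nat list set" where
  "D n 0 = {}"
| "D n (Suc 0) = {[1]}"
| "D n (Suc (Suc 0)) = {[a, 1] | a. a \<in> {1..n}}"
| "D n (Suc (Suc (Suc m))) =
     (let c = replicate (Suc m) 1;
          rest = (\<Union>v \<in> D n (Suc m) - {c}. E1 n v \<union> E2 n v \<union> E3 n v)
      in if odd (m + 3) then E1 n c \<union> E2 n c \<union> rest
         else {c @ [a, 1] | a. a \<in> {1..n}} \<union> rest)"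

end

theory Submission
  imports Defs
begin


lemma rep_snoc: "replicate (Suc n) x = replicate n x @ [x]"
  by (simp add: replicate_append_same)

lemma uniq_rep:
  "P@[y]@replicate k x = P'@[y']@replicate k' x \<Longrightarrow> y\<noteq>x \<Longrightarrow> y'\<noteq>x \<Longrightarrow> P=P' \<and> y=y' \<and> k=k'"
proof (induction k arbitrary: k')
  case 0
  then show ?case
  proof (cases k')
    case 0 then show ?thesis using "0.prems" by simp
  next
    case (Suc j)
    have "last (P@[y]@replicate 0 x) = last (P'@[y']@replicate k' x)" using "0.prems"(1) by simp
    then have "y = x" using Suc by (simp only: rep_snoc) simp
    then show ?thesis using "0.prems" by simp
  qed
next
  case (Suc k)
  show ?case
  proof (cases k')
    case 0
    have "last (P@[y]@replicate (Suc k) x) = last (P'@[y']@replicate k' x)" using Suc.prems(1) by simp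
    then have "y' = x" using 0 by (simp only: rep_snoc) simp
    then show ?thesis using Suc.prems by simp
  next
    case (Suc j)
    have "(P@[y]@replicate k x) @ [x] = (P'@[y']@replicate j x) @ [x]"
      using Suc.prems(1) \<open>k' = Suc j\<close> by (simp only: rep_snoc append_assoc)
    then have "P@[y]@replicate k x = P'@[y']@replicate j x" by simp
    then show ?thesis using Suc.IH Suc.prems \<open>k' = Suc j\<close> by blast
  qed
qed

definition const :: "nat list \<Rightarrow> bool" where
  "const v = (\<exists>x. v = replicate (length v) x)"

lemma ell_props:
  assumes "\<not> const v"
  shows "1 \<le> ell v \<and> ell v \<le> length v - 1 \<and> v!(ell v - 1) \<noteq> v!(ell v) \<and>
         (\<forall>j. ell v \<le> j \<longrightarrow> j < length v \<longrightarrow> v!j = v!(ell v))"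
proof -
  define S where "S = {l \<in> {1..length v - 1}. v ! (l - 1) \<noteq> v ! l}"
  have fin: "finite S" unfolding S_def by (rule finite_subset[of _ "{1..length v - 1}"]) auto
  have ne: "S \<noteq> {}"
  proof
    assume e: "S = {}"
    have "\<forall>j<length v. v!j = v!0"
    proof (intro allI impI)
      fix j assume "j < length v"
      then show "v!j = v!0"
      proof (induction j)
        case 0 then show ?case by simp
      next
        case (Suc j)
        have "Suc j \<in> {1..length v - 1}" using Suc.prems by simp
        moreover have "Suc j \<notin> S" using e by simp
        ultimately have "\<not> (v!(Suc j - 1) \<noteq> v!Suc j)" unfolding S_def by blast
        then have h1: "v!j = v!Suc j" by simp
        have h2: "v!j = v!0" using Suc.IH Suc.prems by simp
        show ?case using h1 h2 by (rule subst)
      qed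
    qed
    then have "v = replicate (length v) (v!0)" by (intro nth_equalityI) auto
    then show False using assms unfolding const_def by blast
  qed
  have ev: "ell v = Max S" unfolding ell_def S_def by (rule refl)
  have mem: "ell v \<in> S" unfolding ev using fin ne by (rule Max_in)
  have rest: "\<forall>j. ell v \<le> j \<longrightarrow> j < length v \<longrightarrow> v!j = v!(ell v)"
  proof -
    have "ell v + d < length v \<longrightarrow> v!(ell v + d) = v!(ell v)" for d
    proof (induction d)
      case 0 then show ?case by simp
    next
      case (Suc d)
      show ?case
      proof
        assume a: "ell v + Suc d < length v"
        have "Suc (ell v + d) \<notin> S"
        proof
          assume "Suc (ell v + d) \<in> S"
          then have "Suc (ell v + d) \<le> Max S" using fin by (rule Max_ge[rotated])
          then show False using ev by linarith
        qed
        moreover have "Suc (ell v + d) \<in> {1..length v - 1}" using a by simp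
        ultimately have "\<not> (v!(Suc (ell v + d) - 1) \<noteq> v!Suc (ell v + d))" unfolding S_def by blast
        then have "v!(ell v + d) = v!(ell v + Suc d)" by simp
        then show "v!(ell v + Suc d) = v!(ell v)" using Suc a by simp
      qed
    qed
    then show ?thesis by (metis le_Suc_ex)
  qed
  have m1: "ell v \<in> {1..length v - 1}" "v!(ell v - 1) \<noteq> v!(ell v)" using mem unfolding S_def by auto
  have m2: "1 \<le> ell v" "ell v \<le> length v - 1" using m1(1) by auto
  show ?thesis using m2 m1(2) rest by blast
qed

lemma E3_decomp:
  assumes "\<not> const v"
  shows "\<exists>P x y k. v = P@[x]@replicate k y \<and> x\<noteq>y \<and> k\<ge>1 \<and> set v = set P \<union> {x,y} \<and>
           E3 n v = {P@[y]@replicate k x@[a,x] | a. a \<in> {1..n}-{x}}"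
proof -
  define l where "l = ell v"
  have pp: "1 \<le> l \<and> l \<le> length v - 1 \<and> v!(l - 1) \<noteq> v!l \<and>
     (\<forall>j. l \<le> j \<longrightarrow> j < length v \<longrightarrow> v!j = v!l)"
    using ell_props[OF assms] unfolding l_def .
  have p1: "1 \<le> l" using pp by blast
  have p2: "l \<le> length v - 1" using pp by blast
  have p3: "v!(l - 1) \<noteq> v!l" using pp by blast
  have p4: "\<And>j. l \<le> j \<Longrightarrow> j < length v \<Longrightarrow> v!j = v!l" using pp by blast
  have d: "drop l v = replicate (length v - l) (v!l)"
  proof (rule nth_equalityI)
    show "length (drop l v) = length (replicate (length v - l) (v!l))" by simp
    fix i assume "i < length (drop l v)"
    then have i: "l + i < length v" by simp
    have "drop l v ! i = v ! (l+i)" using p2 i by simp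
    also have "\<dots> = v!l" using p4[of "l+i"] i by simp
    finally show "drop l v ! i = replicate (length v - l) (v!l) ! i" using i by simp
  qed
  have lv: "l - 1 < length v" using p1 p2 by simp
  have t: "take l v = take (l-1) v @ [v!(l-1)]"
    using take_Suc_conv_app_nth[OF lv] p1 by simp
  have v: "v = take (l-1) v @ [v!(l-1)] @ replicate (length v - l) (v!l)"
  proof -
    have "v = take l v @ drop l v" by simp
    then show ?thesis unfolding t d by simp
  qed
  have k: "length v - l \<ge> 1" using p1 p2 by simp
  then obtain k0 where k0: "length v - l = Suc k0" by (cases "length v - l") auto
  have sv: "set v = set (take (l-1) v) \<union> {v!(l-1), v!l}"
  proof -
    have "set v = set (take (l-1) v @ [v!(l-1)] @ replicate (Suc k0) (v!l))" using v k0 by metis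
    then show ?thesis by auto
  qed
  have e: "E3 n v = {take (l-1) v @ [v!l] @ replicate (length v - l) (v!(l-1)) @ [a, v!(l-1)] | a. a \<in> {1..n}-{v!(l-1)}}"
    unfolding E3_def Let_def l_def ..
  show ?thesis
    by (rule exI[of _ "take (l-1) v"], rule exI[of _ "v!(l-1)"], rule exI[of _ "v!l"], rule exI[of _ "length v - l"])
       (intro conjI v p3 k sv e)
qed

lemma const_iff: "const v \<longleftrightarrow> (\<exists>x. \<forall>y\<in>set v. y = x)"
  unfolding const_def
  by (metis in_set_replicate replicate_length_same)

lemma revI: "X = Y \<Longrightarrow> rev X = rev Y" by simp

lemma snoc2: "xs @ [a,b] = ys @ [c,d] \<Longrightarrow> xs = ys \<and> a = c \<and> b = d"
  by (simp add: append_eq_append_conv)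

lemma E1_E2: "E1 n v \<inter> E2 n v' = {}"
proof (rule equals0I)
  fix w assume "w \<in> E1 n v \<inter> E2 n v'"
  then obtain a a' b where e1: "w = v@[a,a]" and e2: "w = butlast v'@[a',b,last v']" and b: "b \<noteq> last v'"
    unfolding E1_def E2_def by blast
  have "v@[a,a] = (butlast v'@[a'])@[b,last v']" using trans[OF e1[symmetric] e2] by (simp only: append_assoc append_Cons append_Nil)
  then have "v = butlast v'@[a'] \<and> a = b \<and> a = last v'" by (rule snoc2)
  then show False using b by simp
qed

lemma E1_E3: assumes "\<not> const v'" shows "E1 n v \<inter> E3 n v' = {}"
proof (rule equals0I)
  obtain P x y k where d: "v' = P@[x]@replicate k y" "x\<noteq>y" "k\<ge>1"
     "E3 n v' = {P@[y]@replicate k x@[a,x] | a. a \<in> {1..n}-{x}}"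
    using E3_decomp[OF assms] by blast
  fix w assume "w \<in> E1 n v \<inter> E3 n v'"
  then obtain a b where e1: "w = v@[a,a]" and e2: "w = P@[y]@replicate k x@[b,x]" and b: "b \<noteq> x"
    unfolding E1_def d(4) by blast
  have "v@[a,a] = (P@[y]@replicate k x)@[b,x]" using trans[OF e1[symmetric] e2] by (simp only: append_assoc append_Cons append_Nil)
  then have "v = P@[y]@replicate k x \<and> a = b \<and> a = x" by (rule snoc2)
  then show False using b by simp
qed

lemma E2_E3: assumes "\<not> const v'" shows "E2 n v \<inter> E3 n v' = {}"
proof (rule equals0I)
  obtain P x y k where d: "v' = P@[x]@replicate k y" "x\<noteq>y" "k\<ge>1"
     "E3 n v' = {P@[y]@replicate k x@[a,x] | a. a \<in> {1..n}-{x}}"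
    using E3_decomp[OF assms] by blast
  fix w assume "w \<in> E2 n v \<inter> E3 n v'"
  then obtain a a' b where e1: "w = butlast v@[a',b,last v]" and e2: "w = P@[y]@replicate k x@[a,x]"
      and a': "a' \<noteq> last v"
    unfolding E2_def d(4) by blast
  have "(butlast v@[a'])@[b,last v] = (P@[y]@replicate k x)@[a,x]" using trans[OF e1[symmetric] e2] by (simp only: append_assoc append_Cons append_Nil)
  then have "butlast v@[a'] = P@[y]@replicate k x \<and> b = a \<and> last v = x" by (rule snoc2)
  then have "last (butlast v@[a']) = last (P@[y]@replicate k x) \<and> last v = x" by simp
  then have "a' = x \<and> last v = x" using d(3) by simp
  then show False using a' by simp
qed

lemma E1_E1: "v \<noteq> v' \<Longrightarrow> E1 n v \<inter> E1 n v' = {}"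
  unfolding E1_def by auto

lemma E2_E2: "v \<noteq> v' \<Longrightarrow> v \<noteq> [] \<Longrightarrow> v' \<noteq> [] \<Longrightarrow> E2 n v \<inter> E2 n v' = {}"
proof (rule equals0I)
  assume a: "v \<noteq> v'" "v \<noteq> []" "v' \<noteq> []"
  fix w assume "w \<in> E2 n v \<inter> E2 n v'"
  then obtain p q p' q' where e1: "w = butlast v @ [p,q,last v]" and e2: "w = butlast v' @ [p',q',last v']"
    unfolding E2_def by blast
  have "(butlast v @ [p])@[q,last v] = (butlast v' @ [p'])@[q',last v']" using trans[OF e1[symmetric] e2] by (simp only: append_assoc append_Cons append_Nil)
  then have "butlast v @ [p] = butlast v' @ [p'] \<and> q = q' \<and> last v = last v'" by (rule snoc2)
  then have "butlast v = butlast v' \<and> last v = last v'" by simp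
  then have "v = v'" using a by (metis append_butlast_last_id)
  then show False using a by simp
qed

lemma E3_E3: assumes "v \<noteq> v'" "\<not> const v" "\<not> const v'" shows "E3 n v \<inter> E3 n v' = {}"
proof (rule equals0I)
  obtain P x y k where d: "v = P@[x]@replicate k y" "x\<noteq>y" "k\<ge>1"
     "E3 n v = {P@[y]@replicate k x@[a,x] | a. a \<in> {1..n}-{x}}"
    using E3_decomp[OF assms(2)] by blast
  obtain P' x' y' k' where d': "v' = P'@[x']@replicate k' y'" "x'\<noteq>y'" "k'\<ge>1"
     "E3 n v' = {P'@[y']@replicate k' x'@[a,x'] | a. a \<in> {1..n}-{x'}}"
    using E3_decomp[OF assms(3)] by blast
  fix w assume "w \<in> E3 n v \<inter> E3 n v'"
  then obtain a a' where e1: "w = P@[y]@replicate k x@[a,x]" and e2: "w = P'@[y']@replicate k' x'@[a',x']"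
    unfolding d(4) d'(4) by blast
  have "(P@[y]@replicate k x)@[a,x] = (P'@[y']@replicate k' x')@[a',x']" using trans[OF e1[symmetric] e2] by (simp only: append_assoc append_Cons append_Nil)
  then have e3: "P@[y]@replicate k x = P'@[y']@replicate k' x' \<and> a = a' \<and> x = x'" by (rule snoc2)
  then have xx: "x = x'" by blast
  have "P@[y]@replicate k x = P'@[y']@replicate k' x" using e3 xx by metis
  then have "P=P' \<and> y=y' \<and> k=k'" using uniq_rep d(2) d'(2) xx by metis
  then have "v = v'" using d(1) d'(1) xx by simp
  then show False using assms by simp
qed

lemma card_E1: "card (E1 n v) = n" and fin_E1: "finite (E1 n v)"
proof -
  have "E1 n v = (\<lambda>a. v@[a,a]) ` {1..n}" unfolding E1_def by auto
  moreover have "inj_on (\<lambda>a. v@[a,a]) {1..n}" by (auto intro: inj_onI)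
  ultimately show "card (E1 n v) = n" "finite (E1 n v)" by (simp_all add: card_image)
qed

lemma card_E2: assumes "last v \<in> {1..n}" shows "card (E2 n v) = (n-1)^2" and "finite (E2 n v)"
proof -
  let ?S = "{1..n} - {last v}"
  have "E2 n v = (\<lambda>(a,b). butlast v@[a,b,last v]) ` (?S \<times> ?S)" unfolding E2_def by auto
  moreover have "inj_on (\<lambda>(a,b). butlast v@[a,b,last v]) (?S \<times> ?S)" by (auto intro: inj_onI)
  moreover have "card ?S = n - 1" using assms by simp
  ultimately show "card (E2 n v) = (n-1)^2" "finite (E2 n v)"
    by (simp_all add: card_image card_cartesian_product power2_eq_square)
qed

lemma card_E3: assumes "\<not> const v" "set v \<subseteq> {1..n}" shows "card (E3 n v) = n-1" and "finite (E3 n v)"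
proof -
  obtain P x y k where d: "v = P@[x]@replicate k y" "x\<noteq>y" "k\<ge>1" "set v = set P \<union> {x,y}"
     "E3 n v = {P@[y]@replicate k x@[a,x] | a. a \<in> {1..n}-{x}}"
    using E3_decomp[OF assms(1)] by blast
  have "E3 n v = (\<lambda>a. P@[y]@replicate k x@[a,x]) ` ({1..n}-{x})" unfolding d(5) by auto
  moreover have "inj_on (\<lambda>a. P@[y]@replicate k x@[a,x]) ({1..n}-{x})" by (auto intro: inj_onI)
  moreover have "x \<in> {1..n}" using d(4) assms(2) by auto
  ultimately show "card (E3 n v) = n-1" "finite (E3 n v)" by (simp_all add: card_image)
qed





lemma const_one: "const w \<Longrightarrow> 1 \<in> set w \<Longrightarrow> w = replicate (length w) (1::nat)"
  unfolding const_iff by (metis replicate_length_same)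

lemma mem_E1: "w \<in> E1 n v \<Longrightarrow> set v \<subseteq> {1..n} \<Longrightarrow>
   length w = length v + 2 \<and> set w \<subseteq> {1..n} \<and> (const w \<longrightarrow> const v)"
  unfolding E1_def const_iff by auto

lemma mem_E2: "w \<in> E2 n v \<Longrightarrow> v \<noteq> [] \<Longrightarrow> set v \<subseteq> {1..n} \<Longrightarrow>
   length w = length v + 2 \<and> set w \<subseteq> {1..n} \<and> \<not> const w"
proof -
  assume a: "w \<in> E2 n v" "v \<noteq> []" "set v \<subseteq> {1..n}"
  obtain p q where w: "w = butlast v @ [p,q,last v]" "p \<in> {1..n} - {last v}" "q \<in> {1..n} - {last v}"
    using a(1) unfolding E2_def by blast
  have l: "last v \<in> {1..n}" using last_in_set[OF a(2)] a(3) by blast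
  have b: "set (butlast v) \<subseteq> {1..n}" using a(3) by (meson in_set_butlastD subsetD subsetI)
  have "\<not> const w"
  proof
    assume "const w"
    then obtain x where "\<forall>y\<in>set w. y = x" unfolding const_iff by blast
    moreover have "p \<in> set w" "last v \<in> set w" using w(1) by simp_all
    ultimately have "p = x" "last v = x" by blast+
    then show False using w(2) by simp
  qed
  moreover have "length w = length v + 2" using w(1) a(2) by simp
  moreover have "set w \<subseteq> {1..n}"
  proof -
    have "set w = set (butlast v) \<union> {p,q,last v}" using w(1) by simp
    then show ?thesis using b l w(2,3) by blast
  qed
  ultimately show ?thesis by blast
qed

lemma mem_E3: "w \<in> E3 n v \<Longrightarrow> \<not> const v \<Longrightarrow> set v \<subseteq> {1..n} \<Longrightarrow>
   length w = length v + 2 \<and> set w \<subseteq> {1..n} \<and> \<not> const w"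
proof -
  assume a: "w \<in> E3 n v" "\<not> const v" "set v \<subseteq> {1..n}"
  obtain P x y k where d: "v = P@[x]@replicate k y" "x\<noteq>y" "k\<ge>1" "set v = set P \<union> {x,y}"
     "E3 n v = {P@[y]@replicate k x@[b,x] | b. b \<in> {1..n}-{x}}"
    using E3_decomp[OF a(2)] by blast
  obtain b where w: "w = P@[y]@replicate k x@[b,x]" "b \<in> {1..n}-{x}" using a(1) d(5) by blast
  have "\<not> const w"
  proof
    assume "const w"
    then obtain z where "\<forall>u\<in>set w. u = z" unfolding const_iff by blast
    moreover have "b \<in> set w" "x \<in> set w" using w(1) by simp_all
    ultimately have "b = z" "x = z" by blast+
    then show False using w(2) by simp
  qed
  moreover have "length w = length v + 2" using w(1) d(1) by simp
  moreover have "set w \<subseteq> {1..n}"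
  proof -
    have "set (replicate k x) \<subseteq> {x}" by auto
    then have "set w \<subseteq> set P \<union> {y,x,b}" using w(1) by auto
    then show ?thesis using d(4) a(3) w(2) by blast
  qed
  ultimately show ?thesis by blast
qed

lemma G_E2: "{replicate (Suc m) 1 @ [a,1] | a. a\<in>{1..n}} \<inter> E2 n v = {}"
proof (rule equals0I)
  fix w assume "w \<in> {replicate (Suc m) 1 @ [a,1] | a. a\<in>{1..n}} \<inter> E2 n v"
  then obtain a a' b where e1: "w = replicate (Suc m) 1 @ [a,1]" and e2: "w = butlast v@[a',b,last v]"
      and a': "a' \<noteq> last v"
    unfolding E2_def by blast
  have "(replicate m 1 @ [1]) @ [a,1] = (butlast v@[a'])@[b,last v]"
    using trans[OF e1[symmetric] e2] by (simp only: rep_snoc append_assoc append_Cons append_Nil)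
  then have "replicate m 1 @ [1] = butlast v@[a'] \<and> a = b \<and> 1 = last v" by (rule snoc2)
  then have "a' = 1 \<and> last v = 1" by simp
  then show False using a' by simp
qed

lemma G_E3: assumes "\<not> const v" shows "{replicate (Suc m) 1 @ [a,1] | a. a\<in>{1..n}} \<inter> E3 n v = {}"
proof (rule equals0I)
  obtain P x y k where d: "v = P@[x]@replicate k y" "x\<noteq>y" "k\<ge>1"
     "E3 n v = {P@[y]@replicate k x@[b,x] | b. b \<in> {1..n}-{x}}"
    using E3_decomp[OF assms] by blast
  fix w assume "w \<in> {replicate (Suc m) 1 @ [a,1] | a. a\<in>{1..n}} \<inter> E3 n v"
  then obtain a b where e1: "w = replicate (Suc m) 1 @ [a,1]" and e2: "w = P@[y]@replicate k x@[b,x]"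
    unfolding d(4) by blast
  have "(replicate (Suc m) 1) @ [a,1] = (P@[y]@replicate k x)@[b,x]"
    using trans[OF e1[symmetric] e2] by (simp only: append_assoc append_Cons append_Nil)
  then have e3: "replicate (Suc m) 1 = P@[y]@replicate k x \<and> a = b \<and> 1 = x" by (rule snoc2)
  have "y \<in> set (P@[y]@replicate k x)" by simp
  then have "y \<in> set (replicate (Suc m) (1::nat))" using e3 by metis
  then have "y = 1" by auto
  then show False using d(2) e3 by simp
qed

lemma G_E1: "v \<noteq> replicate (Suc m) 1 \<Longrightarrow> {replicate (Suc m) 1 @ [a,1] | a. a\<in>{1..n}} \<inter> E1 n v = {}"
proof (rule equals0I)
  assume v: "v \<noteq> replicate (Suc m) 1"
  fix w assume "w \<in> {replicate (Suc m) 1 @ [a,1] | a. a\<in>{1..n}} \<inter> E1 n v"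
  then obtain a b where e1: "w = replicate (Suc m) 1 @ [a,1]" and e2: "w = v @ [b,b]"
    unfolding E1_def by blast
  have "replicate (Suc m) 1 @ [a,1] = v @ [b,b]" using trans[OF e1[symmetric] e2] .
  then have "replicate (Suc m) 1 = v \<and> a = b \<and> 1 = b" by (rule snoc2)
  then show False using v by metis
qed




definition inv :: "nat \<Rightarrow> nat \<Rightarrow> bool" where
  "inv n t = (finite (D n t) \<and> (\<forall>w\<in>D n t. length w = t \<and> set w \<subseteq> {1..n}) \<and>
      replicate t 1 \<in> D n t \<and> (\<forall>w\<in>D n t. const w \<longrightarrow> w = replicate t 1))"

lemma prev_props:
  assumes "v \<in> D n (Suc m) - {replicate (Suc m) 1}" "inv n (Suc m)"
  shows "\<not> const v" "v \<noteq> []" "set v \<subseteq> {1..n}" "length v = Suc m" "last v \<in> {1..n}"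
proof -
  have v: "v \<in> D n (Suc m)" "v \<noteq> replicate (Suc m) 1" using assms(1) by simp_all
  have i: "\<forall>w\<in>D n (Suc m). length w = Suc m \<and> set w \<subseteq> {1..n}"
     "\<forall>w\<in>D n (Suc m). const w \<longrightarrow> w = replicate (Suc m) 1" using assms(2) unfolding inv_def by blast+
  show l: "length v = Suc m" using i(1) v(1) by blast
  show s: "set v \<subseteq> {1..n}" using i(1) v(1) by blast
  show "\<not> const v" using i(2) v by blast
  show ne: "v \<noteq> []" using l by auto
  show "last v \<in> {1..n}" using last_in_set[OF ne] s by (rule subsetD[rotated])
qed

lemma F_card:
  assumes "v \<in> D n (Suc m) - {replicate (Suc m) 1}" "inv n (Suc m)" "n \<ge> 1"
  shows "finite (E1 n v \<union> E2 n v \<union> E3 n v)" "card (E1 n v \<union> E2 n v \<union> E3 n v) = n^2"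
proof -
  note p = prev_props[OF assms(1,2)]
  have f: "finite (E1 n v)" "finite (E2 n v)" "finite (E3 n v)"
    using fin_E1 card_E2(2)[OF p(5)] card_E3(2)[OF p(1,3)] by auto
  show "finite (E1 n v \<union> E2 n v \<union> E3 n v)" using f by simp
  have d1: "E1 n v \<inter> E2 n v = {}" by (rule E1_E2)
  have d2: "(E1 n v \<union> E2 n v) \<inter> E3 n v = {}" using E1_E3[OF p(1)] E2_E3[OF p(1)] by blast
  have "card (E1 n v \<union> E2 n v \<union> E3 n v) = card (E1 n v) + card (E2 n v) + card (E3 n v)"
    using card_Un_disjoint[OF _ _ d2] card_Un_disjoint[OF _ _ d1] f by simp
  also have "\<dots> = n + (n-1)^2 + (n-1)" using card_E1 card_E2(1)[OF p(5)] card_E3(1)[OF p(1,3)] by simp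
  also have "\<dots> = n^2" using assms(3) by (cases n) (auto simp: power2_eq_square)
  finally show "card (E1 n v \<union> E2 n v \<union> E3 n v) = n^2" .
qed

lemma F_disj:
  assumes "v \<in> D n (Suc m) - {replicate (Suc m) 1}" "v' \<in> D n (Suc m) - {replicate (Suc m) 1}"
    "inv n (Suc m)" "v \<noteq> v'"
  shows "(E1 n v \<union> E2 n v \<union> E3 n v) \<inter> (E1 n v' \<union> E2 n v' \<union> E3 n v') = {}"
proof -
  note p = prev_props[OF assms(1,3)]
  note p' = prev_props[OF assms(2,3)]
  have "E1 n v \<inter> E1 n v' = {}" by (rule E1_E1[OF assms(4)])
  moreover have "E1 n v \<inter> E2 n v' = {}" by (rule E1_E2)
  moreover have "E2 n v \<inter> E1 n v' = {}" using E1_E2[of n v' v] by blast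
  moreover have "E1 n v \<inter> E3 n v' = {}" by (rule E1_E3[OF p'(1)])
  moreover have "E3 n v \<inter> E1 n v' = {}" using E1_E3[OF p(1), of n v'] by blast
  moreover have "E2 n v \<inter> E2 n v' = {}" by (rule E2_E2[OF assms(4) p(2) p'(2)])
  moreover have "E2 n v \<inter> E3 n v' = {}" by (rule E2_E3[OF p'(1)])
  moreover have "E3 n v \<inter> E2 n v' = {}" using E2_E3[OF p(1), of n v'] by blast
  moreover have "E3 n v \<inter> E3 n v' = {}" by (rule E3_E3[OF assms(4) p(1) p'(1)])
  ultimately show ?thesis by blast
qed




lemma rest_facts:
  assumes n: "n \<ge> 1" and IH: "inv n (Suc m)"
  defines "c \<equiv> replicate (Suc m) (1::nat)"
  defines "rest \<equiv> (\<Union>v \<in> D n (Suc m) - {c}. E1 n v \<union> E2 n v \<union> E3 n v)"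
  shows "finite rest" "card rest = (card (D n (Suc m)) - 1) * n^2"
    "\<forall>w\<in>rest. length w = Suc (Suc (Suc m)) \<and> set w \<subseteq> {1..n} \<and> \<not> const w"
    "\<forall>v \<in> D n (Suc m) - {c}. w \<in> E1 n v \<union> E2 n v \<union> E3 n v \<longrightarrow> w \<in> rest"
proof -
  have fp: "finite (D n (Suc m))" and cin: "c \<in> D n (Suc m)" using IH unfolding inv_def c_def by blast+
  have fd: "finite (D n (Suc m) - {c})" using fp by simp
  have ff: "\<forall>v\<in>D n (Suc m) - {c}. finite (E1 n v \<union> E2 n v \<union> E3 n v)"
    using F_card(1)[OF _ IH n] unfolding c_def by blast
  show "finite rest" unfolding rest_def using fd ff by blast
  have "card rest = (\<Sum>v\<in>D n (Suc m) - {c}. card (E1 n v \<union> E2 n v \<union> E3 n v))"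
    unfolding rest_def
  proof (rule card_UN_disjoint[OF fd])
    show "\<forall>v\<in>D n (Suc m) - {c}. finite (E1 n v \<union> E2 n v \<union> E3 n v)" by (rule ff)
    show "\<forall>v\<in>D n (Suc m) - {c}. \<forall>v'\<in>D n (Suc m) - {c}. v \<noteq> v' \<longrightarrow>
        (E1 n v \<union> E2 n v \<union> E3 n v) \<inter> (E1 n v' \<union> E2 n v' \<union> E3 n v') = {}"
      using F_disj[OF _ _ IH] unfolding c_def by blast
  qed
  also have "\<dots> = (\<Sum>v\<in>D n (Suc m) - {c}. n^2)"
    using F_card(2)[OF _ IH n] unfolding c_def by (intro sum.cong) auto
  also have "\<dots> = card (D n (Suc m) - {c}) * n^2" by simp
  also have "card (D n (Suc m) - {c}) = card (D n (Suc m)) - 1" using cin fp by simp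
  finally show "card rest = (card (D n (Suc m)) - 1) * n^2" .
  show "\<forall>w\<in>rest. length w = Suc (Suc (Suc m)) \<and> set w \<subseteq> {1..n} \<and> \<not> const w"
  proof
    fix w assume "w \<in> rest"
    then obtain v where v: "v \<in> D n (Suc m) - {c}" "w \<in> E1 n v \<union> E2 n v \<union> E3 n v"
      unfolding rest_def by blast
    note p = prev_props[OF v(1)[unfolded c_def] IH]
    show "length w = Suc (Suc (Suc m)) \<and> set w \<subseteq> {1..n} \<and> \<not> const w"
    proof (cases "w \<in> E1 n v")
      case True
      then show ?thesis using mem_E1[OF True p(3)] p(1,4) by simp
    next
      case False
      then have "w \<in> E2 n v \<or> w \<in> E3 n v" using v(2) by blast
      then show ?thesis using mem_E2[OF _ p(2,3)] mem_E3[OF _ p(1,3)] p(4) by auto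
    qed
  qed
  show "\<forall>v \<in> D n (Suc m) - {c}. w \<in> E1 n v \<union> E2 n v \<union> E3 n v \<longrightarrow> w \<in> rest"
    unfolding rest_def by blast
qed




lemma step:
  assumes n: "n \<ge> 1" and IH: "inv n (Suc m)"
  shows "inv n (Suc (Suc (Suc m))) \<and>
    card (D n (Suc (Suc (Suc m)))) = (card (D n (Suc m)) - 1) * n^2 + (if odd (m+3) then n + (n-1)^2 else n)"
proof -
  define c where "c = replicate (Suc m) (1::nat)"
  define rest where "rest = (\<Union>v \<in> D n (Suc m) - {c}. E1 n v \<union> E2 n v \<union> E3 n v)"
  note R = rest_facts[OF n IH, folded c_def, folded rest_def]
  have Deq: "D n (Suc (Suc (Suc m))) = (if odd (m + 3) then E1 n c \<union> E2 n c \<union> rest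
         else {c @ [a, 1] | a. a \<in> {1..n}} \<union> rest)"
    unfolding c_def rest_def by (simp only: D.simps Let_def)
  have cin: "c \<in> D n (Suc m)" using IH unfolding inv_def c_def by blast
  have c1: "1 \<in> set c" "set c \<subseteq> {1..n}" "length c = Suc m" "c \<noteq> []" using n unfolding c_def by auto
  have lc: "last c \<in> {1..n}" using last_in_set[OF c1(4)] c1(2) by (rule subsetD[rotated])
  have onec: "c @ [1,1] = replicate (Suc (Suc (Suc m))) 1"
    unfolding c_def by (induct m) auto
  have cnc: "const c" unfolding c_def const_def by simp
  show ?thesis
  proof (cases "odd (m+3)")
    case True
    have D: "D n (Suc (Suc (Suc m))) = E1 n c \<union> E2 n c \<union> rest" using Deq True by simp
    have fE: "finite (E1 n c)" "finite (E2 n c)" using fin_E1 card_E2(2)[OF lc] by auto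
    have "replicate (Suc (Suc (Suc m))) 1 \<in> E1 n c" unfolding E1_def using n onec[symmetric] by auto
    moreover have "\<forall>w \<in> E1 n c \<union> E2 n c. length w = Suc (Suc (Suc m)) \<and> set w \<subseteq> {1..n} \<and>
         (const w \<longrightarrow> w = replicate (Suc (Suc (Suc m))) 1)"
    proof
      fix w assume w: "w \<in> E1 n c \<union> E2 n c"
      show "length w = Suc (Suc (Suc m)) \<and> set w \<subseteq> {1..n} \<and>
         (const w \<longrightarrow> w = replicate (Suc (Suc (Suc m))) 1)"
      proof (cases "w \<in> E1 n c")
        case True
        note q = mem_E1[OF True c1(2)]
        have "1 \<in> set w" using True c1(1) unfolding E1_def by auto
        then show ?thesis using q c1(3) const_one[of w] by auto
      next
        case False
        then have "w \<in> E2 n c" using w by blast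
        then show ?thesis using mem_E2[OF _ c1(4,2)] c1(3) by auto
      qed
    qed
    ultimately have inv: "inv n (Suc (Suc (Suc m)))" unfolding inv_def D using R(1,3) fE by auto
    have d1: "E1 n c \<inter> E2 n c = {}" by (rule E1_E2)
    have d2: "(E1 n c \<union> E2 n c) \<inter> rest = {}"
    proof (rule equals0I)
      fix w assume w: "w \<in> (E1 n c \<union> E2 n c) \<inter> rest"
      then obtain v where v: "v \<in> D n (Suc m) - {c}" "w \<in> E1 n v \<union> E2 n v \<union> E3 n v"
        unfolding rest_def by blast
      note p = prev_props[OF v(1)[unfolded c_def] IH]
      have cv: "c \<noteq> v" using v(1) by blast
      have "(E1 n c \<union> E2 n c) \<inter> (E1 n v \<union> E2 n v \<union> E3 n v) = {}"
        using E1_E1[OF cv, of n] E1_E2[of n c v] E1_E2[of n v c] E1_E3[OF p(1), of n c]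
          E2_E2[OF cv c1(4) p(2), of n] E2_E3[OF p(1), of n c] by blast
      then show False using w v(2) by blast
    qed
    have "card (D n (Suc (Suc (Suc m)))) = card (E1 n c) + card (E2 n c) + card rest"
      unfolding D using card_Un_disjoint[OF _ _ d2] card_Un_disjoint[OF _ _ d1] fE R(1) by simp
    also have "\<dots> = n + (n-1)^2 + (card (D n (Suc m)) - 1) * n^2"
      using card_E1 card_E2(1)[OF lc] R(2) by simp
    finally show ?thesis using inv True by simp
  next
    case False
    define G where "G = {c @ [a, 1] | a. a \<in> {1..n}}"
    have D: "D n (Suc (Suc (Suc m))) = G \<union> rest" using Deq False unfolding G_def by simp
    have Gim: "G = (\<lambda>a. c@[a,1]) ` {1..n}" unfolding G_def by blast
    have fG: "finite G" unfolding Gim by simp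
    have cG: "card G = n" unfolding Gim by (subst card_image) (auto intro: inj_onI)
    have "replicate (Suc (Suc (Suc m))) 1 \<in> G" unfolding G_def using n onec[symmetric] by auto
    moreover have "\<forall>w \<in> G. length w = Suc (Suc (Suc m)) \<and> set w \<subseteq> {1..n} \<and>
         (const w \<longrightarrow> w = replicate (Suc (Suc (Suc m))) 1)"
    proof
      fix w assume "w \<in> G"
      then obtain a where a: "w = c@[a,1]" "a \<in> {1..n}" unfolding G_def by blast
      have "length w = Suc (Suc (Suc m))" using a(1) c1(3) by simp
      moreover have "set w \<subseteq> {1..n}" using a c1(2) n by auto
      moreover have "1 \<in> set w" using a(1) by simp
      ultimately show "length w = Suc (Suc (Suc m)) \<and> set w \<subseteq> {1..n} \<and>
         (const w \<longrightarrow> w = replicate (Suc (Suc (Suc m))) 1)" using const_one[of w] by metis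
    qed
    ultimately have inv: "inv n (Suc (Suc (Suc m)))" unfolding inv_def D
    proof (intro conjI)
      assume A: "replicate (Suc (Suc (Suc m))) 1 \<in> G" and B: "\<forall>w \<in> G. length w = Suc (Suc (Suc m)) \<and> set w \<subseteq> {1..n} \<and>
         (const w \<longrightarrow> w = replicate (Suc (Suc (Suc m))) 1)"
      show "finite (G \<union> rest)" using fG R(1) by simp
      show "replicate (Suc (Suc (Suc m))) 1 \<in> G \<union> rest" using A by (rule UnI1)
      show "\<forall>w\<in>G \<union> rest. length w = Suc (Suc (Suc m)) \<and> set w \<subseteq> {1..n}" using B R(3) by blast
      show "\<forall>w\<in>G \<union> rest. const w \<longrightarrow> w = replicate (Suc (Suc (Suc m))) 1" using B R(3) by blast
    qed
    have d: "G \<inter> rest = {}"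
    proof (rule equals0I)
      fix w assume w: "w \<in> G \<inter> rest"
      then obtain v where v: "v \<in> D n (Suc m) - {c}" "w \<in> E1 n v \<union> E2 n v \<union> E3 n v"
        unfolding rest_def by blast
      note p = prev_props[OF v(1)[unfolded c_def] IH]
      have cv: "v \<noteq> replicate (Suc m) 1" using v(1) c_def by blast
      have "G \<inter> (E1 n v \<union> E2 n v \<union> E3 n v) = {}"
        using G_E1[OF cv, of n] G_E2[of m n v] G_E3[OF p(1), of m n] unfolding G_def c_def by blast
      then show False using w v(2) by blast
    qed
    have "card (D n (Suc (Suc (Suc m)))) = n + (card (D n (Suc m)) - 1) * n^2"
      unfolding D using card_Un_disjoint[OF fG R(1) d] cG R(2) by simp
    then show ?thesis using inv False by simp
  qed
qed




lemma inv_all: "n \<ge> 1 \<Longrightarrow> t \<ge> 1 \<Longrightarrow> inv n t"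
proof (induction n t rule: D.induct)
  case (1 n) then show ?case by simp
next
  case (2 n) then show ?case unfolding inv_def const_def by auto
next
  case (3 n)
  have e: "{[a, 1] |a. a \<in> {1..n}} = (\<lambda>a. [a,1]) ` {1..n}" by blast
  have "replicate 2 (1::nat) = [1,1]" by (simp add: numeral_2_eq_2)
  then show ?case using 3 unfolding inv_def const_iff e by (auto simp: numeral_2_eq_2)
next
  case (4 n m)
  then show ?case using step by simp
qed

lemma card_formula:
  "n \<ge> 2 \<Longrightarrow> t \<ge> 1 \<Longrightarrow> int (n+1) * int (card (D n t)) = int n ^ t + (if odd t then 1 else int n)"
proof (induction n t rule: D.induct)
  case (1 n) then show ?case by simp
next
  case (2 n) then show ?case by simp
next
  case (3 n)
  have e: "{[a, 1] |a. a \<in> {1..n}} = (\<lambda>a. [a,1]) ` {1..n}" by blast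
  have "card (D n (Suc (Suc 0))) = n" unfolding D.simps e by (subst card_image) (auto intro: inj_onI)
  then show ?case by (simp add: algebra_simps power2_eq_square)
next
  case (4 n m)
  have n1: "n \<ge> 1" using 4 by simp
  have I: "inv n (Suc m)" using inv_all[OF n1] by simp
  have S: "card (D n (Suc (Suc (Suc m)))) = (card (D n (Suc m)) - 1) * n^2 + (if odd (m+3) then n + (n-1)^2 else n)"
    using step[OF n1 I] by blast
  have C1: "card (D n (Suc m)) \<ge> 1"
  proof -
    have "finite (D n (Suc m))" "replicate (Suc m) 1 \<in> D n (Suc m)" using I unfolding inv_def by blast+
    then show ?thesis by (metis One_nat_def Suc_leI card_gt_0_iff empty_iff)
  qed
  have IH: "int (n+1) * int (card (D n (Suc m))) = int n ^ Suc m + (if odd (Suc m) then 1 else int n)"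
    using 4 by simp
  define C where "C = int (card (D n (Suc m)))"
  define N where "N = int n"
  have SI: "int (card (D n (Suc (Suc (Suc m))))) = (C - 1) * N^2 + (if odd (m+3) then N + (N-1)^2 else N)"
    using S C1 n1 unfolding C_def N_def by (simp add: of_nat_diff)
  have pw: "N ^ Suc (Suc (Suc m)) = N^2 * N ^ Suc m" by (simp add: power2_eq_square)
  show ?case
  proof (cases "odd m")
    case True
    then have o: "\<not> odd (m+3)" "\<not> odd (Suc m)" "\<not> odd (Suc (Suc (Suc m)))" by auto
    have IH': "(N+1) * C = N ^ Suc m + N" using IH o(2) unfolding C_def N_def by (simp add: algebra_simps)
    have "int (n+1) * int (card (D n (Suc (Suc (Suc m))))) = (N+1) * ((C - 1) * N^2 + N)"
      using SI o(1) unfolding N_def by simp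
    also have "\<dots> = N^2 * ((N+1) * C) - N^2 * (N+1) + (N+1)*N" by (simp add: algebra_simps)
    also have "\<dots> = N ^ Suc (Suc (Suc m)) + N" unfolding IH' pw by (simp add: algebra_simps power2_eq_square)
    finally show ?thesis using o(3) unfolding N_def by simp
  next
    case False
    then have o: "odd (m+3)" "odd (Suc m)" "odd (Suc (Suc (Suc m)))" by auto
    have IH': "(N+1) * C = N ^ Suc m + 1" using IH o(2) unfolding C_def N_def by (simp add: algebra_simps)
    have "int (n+1) * int (card (D n (Suc (Suc (Suc m))))) = (N+1) * ((C - 1) * N^2 + (N + (N-1)^2))"
      using SI o(1) unfolding N_def by simp
    also have "\<dots> = N^2 * ((N+1) * C) - N^2 * (N+1) + (N+1)*(N + (N-1)^2)" by (simp add: algebra_simps)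
    also have "\<dots> = N ^ Suc (Suc (Suc m)) + 1" unfolding IH' pw by (simp add: algebra_simps power2_eq_square)
    finally show ?thesis using o(3) unfolding N_def by simp
  qed
qed

theorem lemma2p4:
  fixes n t :: nat
  assumes "n \<ge> 2" and "t \<ge> 1"
  shows "int (card (D n t)) = \<lceil>real n ^ t / real (n + 1)\<rceil>"
proof -
  define e :: int where "e = (if odd t then 1 else int n)"
  have F: "int (n+1) * int (card (D n t)) = int n ^ t + e" using card_formula[OF assms] unfolding e_def .
  have e1: "e \<ge> 1" "e \<le> int n" using assms(1) unfolding e_def by auto
  have pos: "real (n+1) > 0" by simp
  have FR: "real (n+1) * real (card (D n t)) = real n ^ t + real_of_int e"
    using arg_cong[OF F, of real_of_int] by simp
  have x: "real n ^ t / real (n + 1) = real (card (D n t)) - real_of_int e / real (n+1)"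
    using FR pos by (simp add: field_simps)
  have a1: "real_of_int e / real (n+1) > 0" using e1 pos by simp
  have a2: "real_of_int e / real (n+1) < 1" using e1 pos by (simp add: divide_less_eq)
  show ?thesis
    by (rule ceiling_unique[symmetric]) (use x a1 a2 in auto)
qed


end
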